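(* Let $n\ge4$ and let $\lambda=(a_1,\dots,a_n)$ (usual coordinates) be a dominant weight of $SL(n)$ all of whose coordinates $a_i$ are non-integers. If the multiset $\{a_1,\dots,a_n\}$ contains the three values $\alpha+1,\alpha,\alpha-1$ for some $\alpha\in\mathbb R$, then $M(\lambda)$ contains a non-saturated subset.
   Context: Setup for $SL(n)$: $\varepsilon_1,\dots,\varepsilon_n$ is the standard basis of $\mathbb Q^n$, $e_i=\varepsilon_i-\frac1n(1,\dots,1)$; the character lattice $\mathfrak X(T)$ of the diagonal torus is identified with the $\mathbb Z$-span of $e_1,\dots,e_n$ inside $\{y\in\mathbb Q^n:\sum y_i=0\}$ (the $y_i$ are the "usual coordinates"). $W=S_n$ acts by permuting coordinates. A weight is dominant if $y_1\ge y_2\ge\dots\ge y_n$. The root lattice is $\Phi=\{\sum a_ie_i\mid a_i\in\mathbb Z,\ \sum a_i\equiv0\pmod n\}$. For a dominant weight $\lambda$, $M(\lambda)=\mathrm{conv}\{w\lambda\mid w\in W\}\cap(\lambda+\Phi)$. A finite set is saturated if $\mathbb Z_+(v_1,\dots,v_m)=\mathbb Z(v_1,\dots,v_m)\cap\mathbb Q_+(v_1,\dots,v_m)$ (combinations with non-negative integer, integer, non-negative rational coefficients), non-saturated otherwise. *)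

theory Defs
  imports Complex_Main "HOL-Combinatorics.Permutations"
begin

text \<open>Vectors of Q^n are modelled as functions nat => rat, with coordinates
  y 0, ..., y (n-1) (the usual coordinates y_1,...,y_n) and value 0 outside {..<n}.\<close>

definition lincomb :: "('v \<Rightarrow> rat) \<Rightarrow> 'v set \<Rightarrow> ('v \<Rightarrow> nat \<Rightarrow> rat) \<Rightarrow> nat \<Rightarrow> rat" where
  "lincomb c S f = (\<lambda>j. \<Sum>v\<in>S. c v * f v j)"

definition evec :: "nat \<Rightarrow> nat \<Rightarrow> nat \<Rightarrow> rat" where
  "evec n i = (\<lambda>j. if j < n then (if j = i then 1 else 0) - 1 / of_nat n else 0)"

definition char_lattice :: "nat \<Rightarrow> (nat \<Rightarrow> rat) set" where
  "char_lattice n = {lincomb (\<lambda>i. of_int (a i)) {..<n} (evec n) | a :: nat \<Rightarrow> int. True}"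

definition root_lattice :: "nat \<Rightarrow> (nat \<Rightarrow> rat) set" where
  "root_lattice n = {lincomb (\<lambda>i. of_int (a i)) {..<n} (evec n) | a :: nat \<Rightarrow> int.
                        (\<Sum>i<n. a i) mod int n = 0}"

definition dominant :: "nat \<Rightarrow> (nat \<Rightarrow> rat) \<Rightarrow> bool" where
  "dominant n y \<longleftrightarrow> (\<forall>i j. i \<le> j \<and> j < n \<longrightarrow> y j \<le> y i)"

definition weyl_act :: "nat \<Rightarrow> (nat \<Rightarrow> nat) \<Rightarrow> (nat \<Rightarrow> rat) \<Rightarrow> nat \<Rightarrow> rat" where
  "weyl_act n \<sigma> y = (\<lambda>j. if j < n then y (inv \<sigma> j) else 0)"

definition weyl_orbit :: "nat \<Rightarrow> (nat \<Rightarrow> rat) \<Rightarrow> (nat \<Rightarrow> rat) set" where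
  "weyl_orbit n y = {weyl_act n \<sigma> y | \<sigma>. \<sigma> permutes {..<n}}"

text \<open>Convex hull (over Q; for rational points this is the rational part of the real hull).\<close>
definition conv_hull :: "(nat \<Rightarrow> rat) set \<Rightarrow> (nat \<Rightarrow> rat) set" where
  "conv_hull A = {lincomb c S id | c S. finite S \<and> S \<subseteq> A \<and> (\<forall>v\<in>S. 0 \<le> c v) \<and> sum c S = 1}"

definition M_set :: "nat \<Rightarrow> (nat \<Rightarrow> rat) \<Rightarrow> (nat \<Rightarrow> rat) set" where
  "M_set n lam = conv_hull (weyl_orbit n lam) \<inter> {(\<lambda>j. lam j + p j) | p. p \<in> root_lattice n}"

definition Zplus_span :: "(nat \<Rightarrow> rat) set \<Rightarrow> (nat \<Rightarrow> rat) set" where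
  "Zplus_span V = {lincomb (\<lambda>v. of_nat (c v)) V id | c :: (nat \<Rightarrow> rat) \<Rightarrow> nat. True}"

definition Z_span :: "(nat \<Rightarrow> rat) set \<Rightarrow> (nat \<Rightarrow> rat) set" where
  "Z_span V = {lincomb (\<lambda>v. of_int (c v)) V id | c :: (nat \<Rightarrow> rat) \<Rightarrow> int. True}"

definition Qplus_span :: "(nat \<Rightarrow> rat) set \<Rightarrow> (nat \<Rightarrow> rat) set" where
  "Qplus_span V = {lincomb c V id | c. \<forall>v\<in>V. 0 \<le> c v}"

definition saturated :: "(nat \<Rightarrow> rat) set \<Rightarrow> bool" where
  "saturated V \<longleftrightarrow> Zplus_span V = Z_span V \<inter> Qplus_span V"

end

theory Submission
  imports Defs
begin

lemma char_zero_out: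
  assumes "lam \<in> char_lattice n" "t \<ge> n"
  shows "lam t = 0"
  using assms by (auto simp: char_lattice_def lincomb_def evec_def)

lemma root_mem:
  fixes d :: "nat \<Rightarrow> int"
  assumes "n > 0" "(\<Sum>t<n. d t) = 0"
  shows "(\<lambda>t. if t < n then of_int (d t) else 0) \<in> root_lattice n"
proof -
  have "lincomb (\<lambda>i. of_int (d i)) {..<n} (evec n) = (\<lambda>t. if t < n then of_int (d t) else 0)"
  proof
    fix t
    show "lincomb (\<lambda>i. of_int (d i)) {..<n} (evec n) t = (if t < n then of_int (d t) else 0)"
    proof (cases "t < n")
      case True
      have "lincomb (\<lambda>i. of_int (d i)) {..<n} (evec n) t
          = (\<Sum>i<n. of_int (d i) * (if t = i then 1 else 0)) - (\<Sum>i<n. of_int (d i)) / of_nat n"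
        using True by (simp add: lincomb_def evec_def right_diff_distrib sum_subtractf sum_divide_distrib)
      also have "(\<Sum>i<n. (of_int (d i) :: rat)) = of_int (\<Sum>i<n. d i)" by simp
      also have "\<dots> = 0" using assms(2) by simp
      finally show ?thesis using True by (simp add: if_distrib cong: if_cong)
    qed (simp add: lincomb_def evec_def)
  qed
  then show ?thesis unfolding root_lattice_def using assms(2) by (intro CollectI exI[of _ d]) auto
qed

lemma perm_in_M:
  fixes d :: "nat \<Rightarrow> int"
  assumes "\<tau> permutes {..<n}" "lam \<in> char_lattice n" "n > 0" "(\<Sum>t<n. d t) = 0"
    "\<forall>t<n. lam (\<tau> t) = lam t + of_int (d t)"
  shows "(\<lambda>t. if t < n then lam (\<tau> t) else 0) \<in> M_set n lam"
proof -
  let ?P = "(\<lambda>t. if t < n then lam (\<tau> t) else 0)"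
  have "?P = weyl_act n (inv \<tau>) lam"
    unfolding weyl_act_def inv_inv_eq[OF permutes_bij[OF assms(1)]] by simp
  then have orb: "?P \<in> weyl_orbit n lam"
    unfolding weyl_orbit_def using permutes_inv[OF assms(1)] by blast
  have "?P \<in> conv_hull (weyl_orbit n lam)"
    unfolding conv_hull_def using orb
    by (intro CollectI exI[of _ "\<lambda>_. 1"] exI[of _ "{?P}"]) (auto simp: lincomb_def)
  moreover have "?P = (\<lambda>j. lam j + (\<lambda>t. if t < n then of_int (d t) else 0) j)"
    using assms(5) char_zero_out[OF assms(2)] by (auto simp: fun_eq_iff)
  with root_mem[OF assms(3,4)] have "?P \<in> {(\<lambda>j. lam j + p j) | p. p \<in> root_lattice n}"
    by (intro CollectI exI[of _ "(\<lambda>t. if t < n then of_int (d t) else 0)"]) simp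
  ultimately show ?thesis unfolding M_set_def by blast
qed

lemma lc4:
  assumes "distinct [p1,p2,p3,p4]"
  shows "lincomb f {p1,p2,p3,p4} id t = f p1 * p1 t + f p2 * p2 t + f p3 * p3 t + f p4 * p4 t"
  using assms by (simp add: lincomb_def add.assoc)

lemma sum_ind:
  fixes x n :: nat
  assumes "x < n"
  shows "(\<Sum>t<n. (if t = x then c else 0 :: int)) = c"
  using assms by (subst sum.delta[OF finite_lessThan]) auto

theorem lemma8:
  fixes n :: nat and lam :: "nat \<Rightarrow> rat"
  assumes "n \<ge> 4"
    and "lam \<in> char_lattice n"
    and "dominant n lam"
    and "\<forall>i<n. lam i \<notin> \<int>"
    and "\<exists>\<alpha>::real. \<exists>i<n. \<exists>j<n. \<exists>k<n. of_rat (lam i) = \<alpha> + 1 \<and> of_rat (lam j) = \<alpha>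
            \<and> of_rat (lam k) = \<alpha> - 1"
  shows "\<exists>S. finite S \<and> S \<subseteq> M_set n lam \<and> \<not> saturated S"
proof -
  obtain \<alpha> :: real and i j k where ijk: "i < n" "j < n" "k < n"
    and h: "of_rat (lam i) = \<alpha> + 1" "of_rat (lam j) = \<alpha>" "of_rat (lam k) = \<alpha> - 1"
    using assms(5) by blast
  define a where "a = lam j"
  have li: "lam i = a + 1"
  proof -
    have "(of_rat (lam i) :: real) = of_rat (lam j + 1)" using h by (simp add: of_rat_add)
    then show ?thesis unfolding a_def of_rat_eq_iff .
  qed
  have lk: "lam k = a - 1"
  proof -
    have "(of_rat (lam k) :: real) = of_rat (lam j - 1)" using h by (simp add: of_rat_diff)
    then show ?thesis unfolding a_def of_rat_eq_iff .
  qed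
  have lj: "lam j = a" by (simp add: a_def)
  have a0: "a \<noteq> 0" using assms(4) ijk(2) unfolding a_def by fastforce
  have dij: "i \<noteq> j" "j \<noteq> k" "i \<noteq> k" using li lj lk by auto
  have n0: "n > 0" using assms(1) by simp
  have lz: "\<And>t. t \<ge> n \<Longrightarrow> lam t = 0" using char_zero_out[OF assms(2)] by blast
  define V where "V x y z = (\<lambda>t. if t = i then x else if t = j then y else if t = k then z else lam t)"
    for x y z :: rat
  have Vi: "V x y z i = x" "V x y z j = y" "V x y z k = z" for x y z
    using dij by (auto simp: V_def)
  have Vo: "t \<noteq> i \<Longrightarrow> t \<noteq> j \<Longrightarrow> t \<noteq> k \<Longrightarrow> V x y z t = lam t" for x y z t
    by (simp add: V_def)
  have Vinj: "V x y z = V x' y' z' \<longleftrightarrow> x = x' \<and> y = y' \<and> z = z'" for x y z x' y' z'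
    by (metis Vi)
  define P1 where "P1 = V (a+1) a (a-1)"
  define P2 where "P2 = V (a+1) (a-1) a"
  define P3 where "P3 = V a (a-1) (a+1)"
  define P4 where "P4 = V (a-1) a (a+1)"
  define C where "C = V a a a"
  have dist: "distinct [P1,P2,P3,P4]"
    unfolding P1_def P2_def P3_def P4_def by (simp add: Vinj)
  define S where "S = {P1,P2,P3,P4}"
  let ?Q = "\<lambda>\<tau>. (\<lambda>t. if t < n then lam (\<tau> t) else 0)"
  have QV: "\<forall>t. ?Q \<tau> t = V x y z t \<Longrightarrow> ?Q \<tau> = V x y z" for \<tau> x y z by auto
  have M1: "P1 \<in> M_set n lam"
  proof -
    have "?Q id = P1" unfolding P1_def
      by (rule QV) (auto simp: V_def li lj lk lz dij ijk)
    moreover have "?Q id \<in> M_set n lam"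
      by (rule perm_in_M[where d="\<lambda>_. 0"]) (use assms(2) n0 permutes_id[unfolded id_def] in auto)
    ultimately show ?thesis by simp
  qed
  have M2: "P2 \<in> M_set n lam"
  proof -
    have "?Q (transpose j k) = P2" unfolding P2_def
      by (rule QV) (auto simp: V_def li lj lk lz dij dij[symmetric] ijk transpose_def)
    moreover have "?Q (transpose j k) \<in> M_set n lam"
      by (rule perm_in_M[where d="\<lambda>t. (if t = j then -1 else 0) + (if t = k then 1 else 0)"])
        (simp add: permutes_swap_id ijk, rule assms(2), rule n0, simp add: sum.distrib sum_ind ijk,
         use ijk dij in \<open>auto simp: transpose_def li lj lk\<close>)
    ultimately show ?thesis by simp
  qed
  have M3: "P3 \<in> M_set n lam"
  proof -
    have "?Q (transpose i j \<circ> transpose j k) = P3" unfolding P3_def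
      by (rule QV) (auto simp: V_def li lj lk lz dij dij[symmetric] ijk transpose_def)
    moreover have "?Q (transpose i j \<circ> transpose j k) \<in> M_set n lam"
      proof (rule perm_in_M[where d="\<lambda>t. (if t = i then -1 else 0) + (if t = j then -1 else 0) + (if t = k then 2 else 0)"])
      show "transpose i j \<circ> transpose j k permutes {..<n}"
        by (rule permutes_compose) (simp_all add: permutes_swap_id ijk)
    qed (use assms(2) n0 ijk dij in \<open>auto simp: sum.distrib sum_ind transpose_def li lj lk\<close>)
    ultimately show ?thesis by simp
  qed
  have M4: "P4 \<in> M_set n lam"
  proof -
    have "?Q (transpose i k) = P4" unfolding P4_def
      by (rule QV) (auto simp: V_def li lj lk lz dij dij[symmetric] ijk transpose_def)
    moreover have "?Q (transpose i k) \<in> M_set n lam"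
      by (rule perm_in_M[where d="\<lambda>t. (if t = i then -2 else 0) + (if t = k then 2 else 0)"])
        (simp add: permutes_swap_id ijk, rule assms(2), rule n0, simp add: sum.distrib sum_ind ijk,
         use ijk dij in \<open>auto simp: transpose_def li lj lk\<close>)
    ultimately show ?thesis by simp
  qed
  have SM: "S \<subseteq> M_set n lam" using M1 M2 M3 M4 by (simp add: S_def)
  have CZ: "C \<in> Z_span S"
  proof -
    define c where "c v = (if v = P1 then 1 else if v = P2 then -1 else if v = P3 then 1 else (0::int))" for v
    have "lincomb (\<lambda>v. of_int (c v)) S id = C"
    proof
      fix t
      show "lincomb (\<lambda>v. of_int (c v)) S id t = C t"
        unfolding S_def lc4[OF dist] using dist
        by (cases "t = i \<or> t = j \<or> t = k")
           (auto simp: c_def P1_def P2_def P3_def P4_def C_def Vi Vo)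
    qed
    then show ?thesis unfolding Z_span_def by blast
  qed
  have CQ: "C \<in> Qplus_span S"
  proof -
    define c where "c v = (if v = P1 then 1/2 else if v = P4 then 1/2 else (0::rat))" for v
    have "lincomb c S id = C"
    proof
      fix t
      show "lincomb c S id t = C t"
        unfolding S_def lc4[OF dist] using dist
        by (cases "t = i \<or> t = j \<or> t = k")
           (auto simp: c_def P1_def P2_def P3_def P4_def C_def Vi Vo field_simps)
    qed
    moreover have "\<forall>v\<in>S. 0 \<le> c v" by (simp add: c_def)
    ultimately show ?thesis unfolding Qplus_span_def by blast
  qed
  have CN: "C \<notin> Zplus_span S"
  proof
    assume "C \<in> Zplus_span S"
    then obtain c :: "(nat \<Rightarrow> rat) \<Rightarrow> nat" where hc: "C = lincomb (\<lambda>v. of_nat (c v)) S id"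
      unfolding Zplus_span_def by blast
    define c1 where "c1 = (of_nat (c P1) :: rat)"
    define c2 where "c2 = (of_nat (c P2) :: rat)"
    define c3 where "c3 = (of_nat (c P3) :: rat)"
    define c4 where "c4 = (of_nat (c P4) :: rat)"
    have ev: "C t = c1 * P1 t + c2 * P2 t + c3 * P3 t + c4 * P4 t" for t
      unfolding hc S_def lc4[OF dist] c1_def c2_def c3_def c4_def by simp
    have ei: "a = c1*(a+1)+c2*(a+1)+c3*a+c4*(a-1)"
      using ev[of i] by (simp add: P1_def P2_def P3_def P4_def C_def Vi)
    have ej: "a = c1*a+c2*(a-1)+c3*(a-1)+c4*a"
      using ev[of j] by (simp add: P1_def P2_def P3_def P4_def C_def Vi)
    have ek: "a = c1*(a-1)+c2*a+c3*(a+1)+c4*(a+1)"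
      using ev[of k] by (simp add: P1_def P2_def P3_def P4_def C_def Vi)
    have "3 * a * (1 - (c1+c2+c3+c4)) = 0"
      using ei ej ek by (simp add: algebra_simps)
    then have s1: "c1+c2+c3+c4 = 1" using a0 by simp
    have "a = a * (c1+c2+c3+c4) - c2 - c3" using ej by (simp add: algebra_simps)
    then have "c2 + c3 = 0" using s1 by simp
    then have "c2 = 0" "c3 = 0" unfolding c2_def c3_def by simp_all
    moreover have "a = a * (c1+c2+c3+c4) + c1 + c2 - c4" using ei by (simp add: algebra_simps)
    ultimately have "c1 = c4" "2 * c1 = 1" using s1 by simp_all
    then have "2 * c P1 = 1" unfolding c1_def by (metis of_nat_1 of_nat_eq_iff of_nat_mult of_nat_numeral)
    then show False by presburger
  qed
  have "\<not> saturated S" unfolding saturated_def using CZ CQ CN by blast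
  moreover have "finite S" by (simp add: S_def)
  ultimately show ?thesis using SM by blast
qed

end
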